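(* Let $g_1, g_2\in G(\Gamma)$ be strongly non-split. Then there exists a linear order on $V(\Gamma)$ together with vertices $v_1\in\operatorname{supp}(g_1)$ and $v_2\in\operatorname{supp}(g_2)$ such that both the $v_1$-conical conjugate of $g_1$ and the $v_2$-conical conjugate of $g_2$ are strongly non-split and SD-conical.
   Context: $\Gamma$ is a finite simple graph and $G(\Gamma)=\langle v\in V(\Gamma)\mid [v_i,v_j]=1 \text{ if } \{v_i,v_j\}\notin E(\Gamma)\rangle$, i.e. the right-angled Artin group on the complement graph $\Gamma^c$ (generators joined by an edge of $\Gamma$ do not commute). $|g|$ is word length and $\operatorname{supp}(g)$ is the set of generators appearing in a reduced word for $g$. A decomposition $g=g_1\cdots g_k$ is geodesic if $|g|=|g_1|+\cdots+|g_k|$. $g$ is cyclically reduced if it has minimal word length in its conjugacy class. $g$ is non-split if $\operatorname{supp}(g)$ spans a connected subgraph of $\Gamma$; it is strongly non-split if it is non-split and no generator $v$ disjointly commutes with $g$ (i.e. there is no $v\notin\operatorname{supp}(g)$ commuting with every generator in $\operatorname{supp}(g)$). $S(g)$ is the set of generators $v$ such that $g=v^{\pm1}h$ is geodesic for some $h$; $g$ is $v_0$-conical if $S(g)=\{v_0\}$, and then $v_0=\operatorname{apex}(g)$. Given a linear order on $V(\Gamma)$, a conical element $g$ is SD-conical if $\operatorname{apex}(g)$ does not commute with any generator smaller than it (i.e. $v<\operatorname{apex}(g)$ implies $\{v,\operatorname{apex}(g)\}\in E(\Gamma)$). For a non-split, cyclically reduced $g$ and $v_0\in\operatorname{supp}(g)$,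 the $v_0$-conical conjugate of $g$ is defined as follows: for a non-split $h$ and $v\in\operatorname{supp}(h)$ there is a unique geodesic decomposition $h=tp$ with $p$ $v$-conical and $v\notin\operatorname{supp}(t)$; starting from $g_0=g$, write $g_i=t_ip_i$ in this way (with $v=v_0$) and set $g_{i+1}=p_it_i$; for the smallest $k$ with $g_k$ $v_0$-conical (such $k\le|V(\Gamma)|-1$ exists), the $v_0$-conical conjugate is $g_k$. It is a conjugate of $g$ obtained by iterated cyclic conjugations, has the same support as $g$, and is again non-split and cyclically reduced. (In the lemma the $g_i$ are implicitly taken cyclically reduced so that conical conjugates are defined.) *)

theory Defs
  imports Main
begin

(* Right-angled Artin group G(Gamma) on the complement graph of Gamma.
   Gamma: vertex set = the finite type 'v, edge relation E (symmetric, irreflexive).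
   Letters are (v, True) = v and (v, False) = v^-1.
   Group elements are represented as equivalence classes of words. *)

type_synonym 'v letter = "'v \<times> bool"
type_synonym 'v elt = "'v letter list set"

inductive rstep :: "('v \<Rightarrow> 'v \<Rightarrow> bool) \<Rightarrow> 'v letter list \<Rightarrow> 'v letter list \<Rightarrow> bool"
  for E where
  cancel: "rstep E (xs @ [(v, b), (v, \<not> b)] @ ys) (xs @ ys)"
| comm: "\<not> E (fst a) (fst c) \<Longrightarrow> rstep E (xs @ [a, c] @ ys) (xs @ [c, a] @ ys)"

definition weq :: "('v \<Rightarrow> 'v \<Rightarrow> bool) \<Rightarrow> 'v letter list \<Rightarrow> 'v letter list \<Rightarrow> bool" where
  "weq E = equivclp (rstep E)"

definition cls :: "('v \<Rightarrow> 'v \<Rightarrow> bool) \<Rightarrow> 'v letter list \<Rightarrow> 'v elt" where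
  "cls E w = {u. weq E w u}"

definition raag :: "('v \<Rightarrow> 'v \<Rightarrow> bool) \<Rightarrow> 'v elt set" where
  "raag E = range (cls E)"

definition gmul :: "('v \<Rightarrow> 'v \<Rightarrow> bool) \<Rightarrow> 'v elt \<Rightarrow> 'v elt \<Rightarrow> 'v elt" where
  "gmul E g h = {u. \<exists>x\<in>g. \<exists>y\<in>h. weq E (x @ y) u}"

definition inv_word :: "'v letter list \<Rightarrow> 'v letter list" where
  "inv_word w = rev (map (\<lambda>(v, b). (v, \<not> b)) w)"

definition ginv :: "('v \<Rightarrow> 'v \<Rightarrow> bool) \<Rightarrow> 'v elt \<Rightarrow> 'v elt" where
  "ginv E g = {u. \<exists>x\<in>g. weq E (inv_word x) u}"

definition gen :: "('v \<Rightarrow> 'v \<Rightarrow> bool) \<Rightarrow> 'v \<Rightarrow> bool \<Rightarrow> 'v elt" where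
  "gen E v b = cls E [(v, b)]"

definition glen :: "'v elt \<Rightarrow> nat" where
  "glen g = (LEAST n. \<exists>w\<in>g. length w = n)"

definition supp :: "'v elt \<Rightarrow> 'v set" where
  "supp g = {v. \<exists>w\<in>g. length w = glen g \<and> v \<in> fst ` set w}"

definition cyc_reduced :: "('v \<Rightarrow> 'v \<Rightarrow> bool) \<Rightarrow> 'v elt \<Rightarrow> bool" where
  "cyc_reduced E g \<longleftrightarrow> (\<forall>h\<in>raag E. glen g \<le> glen (gmul E (gmul E h g) (ginv E h)))"

definition connected_in :: "('v \<Rightarrow> 'v \<Rightarrow> bool) \<Rightarrow> 'v set \<Rightarrow> bool" where
  "connected_in E S \<longleftrightarrow> S \<noteq> {} \<and>
     (\<forall>u\<in>S. \<forall>v\<in>S. (\<lambda>x y. x \<in> S \<and> y \<in> S \<and> E x y)\<^sup>*\<^sup>* u v)"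

definition non_split :: "('v \<Rightarrow> 'v \<Rightarrow> bool) \<Rightarrow> 'v elt \<Rightarrow> bool" where
  "non_split E g \<longleftrightarrow> connected_in E (supp g)"

definition disj_commutes :: "('v \<Rightarrow> 'v \<Rightarrow> bool) \<Rightarrow> 'v \<Rightarrow> 'v elt \<Rightarrow> bool" where
  "disj_commutes E v g \<longleftrightarrow> v \<notin> supp g \<and> (\<forall>u\<in>supp g. \<not> E v u)"

definition strongly_non_split :: "('v \<Rightarrow> 'v \<Rightarrow> bool) \<Rightarrow> 'v elt \<Rightarrow> bool" where
  "strongly_non_split E g \<longleftrightarrow> non_split E g \<and> (\<nexists>v. disj_commutes E v g)"

definition Sset :: "('v \<Rightarrow> 'v \<Rightarrow> bool) \<Rightarrow> 'v elt \<Rightarrow> 'v set" where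
  "Sset E g = {v. \<exists>b. \<exists>h\<in>raag E. g = gmul E (gen E v b) h \<and> glen g = 1 + glen h}"

definition conical :: "('v \<Rightarrow> 'v \<Rightarrow> bool) \<Rightarrow> 'v \<Rightarrow> 'v elt \<Rightarrow> bool" where
  "conical E v g \<longleftrightarrow> Sset E g = {v}"

text \<open>SD-conical w.r.t. a linear order R (R is the non-strict order relation).\<close>
definition SD_conical :: "('v \<Rightarrow> 'v \<Rightarrow> bool) \<Rightarrow> 'v rel \<Rightarrow> 'v elt \<Rightarrow> bool" where
  "SD_conical E R g \<longleftrightarrow> (\<exists>v0. conical E v0 g \<and>
      (\<forall>v. (v, v0) \<in> R \<and> v \<noteq> v0 \<longrightarrow> E v v0))"

text \<open>The unique geodesic decomposition h = t p, p v-conical, v not in supp t.\<close>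
definition conical_dec :: "('v \<Rightarrow> 'v \<Rightarrow> bool) \<Rightarrow> 'v \<Rightarrow> 'v elt \<Rightarrow> 'v elt \<times> 'v elt" where
  "conical_dec E v h = (THE (t, p). t \<in> raag E \<and> p \<in> raag E \<and> h = gmul E t p \<and>
      glen h = glen t + glen p \<and> conical E v p \<and> v \<notin> supp t)"

definition conical_step :: "('v \<Rightarrow> 'v \<Rightarrow> bool) \<Rightarrow> 'v \<Rightarrow> 'v elt \<Rightarrow> 'v elt" where
  "conical_step E v g = (case conical_dec E v g of (t, p) \<Rightarrow> gmul E p t)"

definition conical_conj :: "('v \<Rightarrow> 'v \<Rightarrow> bool) \<Rightarrow> 'v \<Rightarrow> 'v elt \<Rightarrow> 'v elt" where
  "conical_conj E v g =
     (conical_step E v ^^ (LEAST k. conical E v ((conical_step E v ^^ k) g))) g"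

end

theory Submission
  imports Defs
begin


locale rg =
  fixes E :: "'v \<Rightarrow> 'v \<Rightarrow> bool"
  assumes symE: "symp E"
begin

lemma Esym: "E x y \<Longrightarrow> E y x"
  using symE by (meson sympD)

definition sw :: "'v letter list \<Rightarrow> 'v letter list \<Rightarrow> bool" where
  "sw u w \<longleftrightarrow> (\<exists>xs a c ys. \<not> E (fst a) (fst c) \<and> u = xs @ [a, c] @ ys \<and> w = xs @ [c, a] @ ys)"

abbreviation ceq where "ceq \<equiv> sw\<^sup>*\<^sup>*"

lemma sw_sym: "sw u w \<Longrightarrow> sw w u"
  unfolding sw_def using Esym by blast

lemma ceq_sym: "ceq u w \<Longrightarrow> ceq w u"
proof (induction rule: rtranclp_induct)
  case base then show ?case by simp
next
  case (step y z) then show ?case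
    by (meson converse_rtranclp_into_rtranclp sw_sym)
qed

lemma ceq_trans: "ceq u w \<Longrightarrow> ceq w z \<Longrightarrow> ceq u z"
  by (rule rtranclp_trans)

lemma sw_ctx: "sw u w \<Longrightarrow> sw (p @ u @ q) (p @ w @ q)"
  unfolding sw_def by (metis append.assoc)

lemma ceq_ctx: "ceq u w \<Longrightarrow> ceq (p @ u @ q) (p @ w @ q)"
proof (induction rule: rtranclp_induct)
  case base then show ?case by simp
next
  case (step y z) then show ?case
    by (meson rtranclp.rtrancl_into_rtrancl sw_ctx)
qed

lemma ceq_Cons: "ceq u w \<Longrightarrow> ceq (x # u) (x # w)"
  using ceq_ctx[of u w "[x]" "[]"] by simp

lemma ceq_app: "ceq a a' \<Longrightarrow> ceq b b' \<Longrightarrow> ceq (a @ b) (a' @ b')"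
  using ceq_ctx[of a a' "[]" b] ceq_ctx[of b b' a' "[]"] by simp

lemma sw_set: "sw u w \<Longrightarrow> set u = set w \<and> length u = length w"
  unfolding sw_def by auto

lemma ceq_set: "ceq u w \<Longrightarrow> set u = set w"
  by (induction rule: rtranclp_induct) (auto dest: sw_set)

lemma ceq_length: "ceq u w \<Longrightarrow> length u = length w"
  by (induction rule: rtranclp_induct) (auto dest: sw_set)

lemma move: "\<forall>z\<in>set c1. \<not> E (fst z) (fst x) \<Longrightarrow> ceq (c1 @ x # c2) (x # c1 @ c2)"
proof (induction c1)
  case Nil then show ?case by simp
next
  case (Cons z c1)
  then have "ceq (z # c1 @ x # c2) (z # x # c1 @ c2)" by (simp add: ceq_Cons)
  moreover have "sw (z # x # c1 @ c2) (x # z # c1 @ c2)"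
    unfolding sw_def using Cons.prems by (metis append_Cons append_Nil list.set_intros(1))
  ultimately show ?case by simp
qed

lemma split4:
  assumes "c1 @ x # c2 = a @ y # z # b"
  shows "(\<exists>a2. a = c1 @ x # a2 \<and> c2 = a2 @ y # z # b) \<or> (c1 = a \<and> x = y \<and> c2 = z # b)
    \<or> (c1 = a @ [y] \<and> x = z \<and> c2 = b) \<or> (\<exists>m. c1 = a @ y # z # m \<and> b = m @ x # c2)"
proof -
  from assms have "c1 @ (x # c2) = a @ (y # z # b)" by simp
  then obtain us where "(c1 = a @ us \<and> us @ x # c2 = y # z # b) \<or> (c1 @ us = a \<and> x # c2 = us @ y # z # b)"
    by (auto simp: append_eq_append_conv2)
  then show ?thesis
  proof
    assume h: "c1 = a @ us \<and> us @ x # c2 = y # z # b"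
    show ?thesis
    proof (cases us)
      case Nil then show ?thesis using h by auto
    next
      case (Cons u1 us')
      show ?thesis
      proof (cases us')
        case Nil then show ?thesis using h Cons by auto
      next
        case (Cons u2 us'')
        then show ?thesis using h \<open>us = u1 # us'\<close> by auto
      qed
    qed
  next
    assume h: "c1 @ us = a \<and> x # c2 = us @ y # z # b"
    show ?thesis
    proof (cases us)
      case Nil then show ?thesis using h by auto
    next
      case (Cons u1 us')
      then show ?thesis using h by auto
    qed
  qed
qed

lemma front:
  assumes "ceq (x # w) c"
  shows "\<exists>c1 c2. c = c1 @ x # c2 \<and> (\<forall>z\<in>set c1. \<not> E (fst z) (fst x) \<and> z \<noteq> x) \<and> ceq w (c1 @ c2)"
  using assms
proof (induction rule: rtranclp_induct)
  case base
  then show ?case by (rule exI[of _ "[]"]) simp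
next
  case (step c d)
  then obtain c1 c2 where c: "c = c1 @ x # c2" and cm: "\<forall>z\<in>set c1. \<not> E (fst z) (fst x) \<and> z \<noteq> x"
    and cw: "ceq w (c1 @ c2)" by blast
  from step(2) obtain xs a b ys where ab: "\<not> E (fst a) (fst b)" and cd: "c = xs @ [a, b] @ ys"
    and dd: "d = xs @ [b, a] @ ys" unfolding sw_def by blast
  from c cd have "c1 @ x # c2 = xs @ a # b # ys" by simp
  from split4[OF this] show ?case
  proof (elim disjE exE conjE)
    fix a2 assume h: "xs = c1 @ x # a2" "c2 = a2 @ a # b # ys"
    have "sw (c1 @ c2) (c1 @ a2 @ b # a # ys)"
      unfolding sw_def using ab h by (metis append.assoc append_Cons append_Nil)
    then have "ceq w (c1 @ a2 @ b # a # ys)" using cw by simp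
    then show ?thesis using h dd cm by (intro exI[of _ c1] exI[of _ "a2 @ b # a # ys"]) auto
  next
    assume h: "c1 = xs" "x = a" "c2 = b # ys"
    show ?thesis
    proof (cases "b = x")
      case True
      then show ?thesis using h dd cd c cm cw by (intro exI[of _ c1] exI[of _ c2]) auto
    next
      case False
      then show ?thesis using h dd cm cw Esym ab
        by (intro exI[of _ "c1 @ [b]"] exI[of _ ys]) auto
    qed
  next
    assume h: "c1 = xs @ [a]" "x = b" "c2 = ys"
    then show ?thesis using dd cm cw by (intro exI[of _ xs] exI[of _ "a # ys"]) auto
  next
    fix m assume h: "c1 = xs @ a # b # m" "ys = m @ x # c2"
    have "sw (c1 @ c2) (xs @ b # a # m @ c2)"
      unfolding sw_def using ab h by (metis append.assoc append_Cons append_Nil)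
    then have "ceq w (xs @ b # a # m @ c2)" using cw by simp
    then show ?thesis using h dd cm by (intro exI[of _ "xs @ b # a # m"] exI[of _ c2]) auto
  qed
qed

end



context rg
begin

lemma cancel: "ceq (x # a) (x # b) \<Longrightarrow> ceq a b"
proof -
  assume "ceq (x # a) (x # b)"
  from front[OF this] obtain c1 c2 where h: "x # b = c1 @ x # c2"
    "\<forall>z\<in>set c1. \<not> E (fst z) (fst x) \<and> z \<noteq> x" "ceq a (c1 @ c2)" by blast
  then have "c1 = []" by (cases c1) auto
  then show ?thesis using h by simp
qed

lemma levi2:
  assumes "ceq (a # w1) (b # w2)" "a \<noteq> b"
  shows "\<exists>w3. ceq w1 (b # w3) \<and> ceq w2 (a # w3)"
proof -
  from front[OF assms(1)] obtain c1 c2 where h: "b # w2 = c1 @ a # c2"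
    "\<forall>z\<in>set c1. \<not> E (fst z) (fst a) \<and> z \<noteq> a" "ceq w1 (c1 @ c2)" by blast
  then obtain c1' where c1: "c1 = b # c1'" using assms(2) by (cases c1) auto
  then have w2: "w2 = c1' @ a # c2" using h by simp
  have "ceq w2 (a # c1' @ c2)" unfolding w2 by (rule move) (use h c1 in auto)
  then show ?thesis using h c1 by auto
qed

lemma levi:
  "ceq (a @ c) (a' @ c') \<Longrightarrow> \<exists>x y z s. ceq a (x @ y) \<and> ceq c (z @ s) \<and> ceq a' (x @ z) \<and> ceq c' (y @ s)"
proof (induction a arbitrary: a' c')
  case Nil
  then show ?case by (intro exI[of _ "[]"] exI[of _ "[]"] exI[of _ a'] exI[of _ c']) auto
next
  case (Cons h a0)
  from front[of h "a0 @ c", OF Cons.prems[simplified]] obtain d1 d2 where d: "a' @ c' = d1 @ h # d2"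
    and dc: "\<forall>z\<in>set d1. \<not> E (fst z) (fst h) \<and> z \<noteq> h" and dw: "ceq (a0 @ c) (d1 @ d2)" by blast
  from d obtain us where "(a' = d1 @ us \<and> us @ c' = h # d2) \<or> (a' @ us = d1 \<and> c' = us @ h # d2)"
    by (auto simp: append_eq_append_conv2)
  then show ?case
  proof
    assume hh: "a' = d1 @ us \<and> us @ c' = h # d2"
    show ?case
    proof (cases us)
      case Nil
      then have hh2: "a' = d1" "c' = h # d2" using hh by auto
      from Cons.IH[of a' d2] dw hh2 obtain x y z s where
        xyzs: "ceq a0 (x @ y)" "ceq c (z @ s)" "ceq a' (x @ z)" "ceq d2 (y @ s)" by auto
      have setx: "\<forall>q\<in>set x. \<not> E (fst q) (fst h)" using ceq_set[OF xyzs(3)] dc hh2 by auto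
      have "ceq (h # a0) (h # x @ y)" using xyzs(1) by (rule ceq_Cons)
      moreover have "ceq (h # x @ y) (x @ h # y)" using move[OF setx, of y] by (rule ceq_sym)
      ultimately have 1: "ceq (h # a0) (x @ (h # y))" by (rule ceq_trans)
      have 2: "ceq c' ((h # y) @ s)" using hh2 xyzs(4) by (simp add: ceq_Cons)
      show ?thesis using 1 2 xyzs by blast
    next
      case (Cons u us')
      then have hh2: "u = h" "a' = d1 @ h # us'" "d2 = us' @ c'" using hh by auto
      from Cons.IH[of "d1 @ us'" c'] dw hh2 obtain x y z s where
        xyzs: "ceq a0 (x @ y)" "ceq c (z @ s)" "ceq (d1 @ us') (x @ z)" "ceq c' (y @ s)" by auto
      have "ceq a' (h # d1 @ us')" unfolding hh2 using move dc by auto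
      also have "ceq (h # d1 @ us') ((h # x) @ z)" using xyzs(3) by (simp add: ceq_Cons)
      finally have 1: "ceq a' ((h # x) @ z)" .
      have 2: "ceq (h # a0) ((h # x) @ y)" using xyzs(1) by (simp add: ceq_Cons)
      show ?thesis using 1 2 xyzs by blast
    qed
  next
    assume hh: "a' @ us = d1 \<and> c' = us @ h # d2"
    from Cons.IH[of a' "us @ d2"] dw hh obtain x y z s where
      xyzs: "ceq a0 (x @ y)" "ceq c (z @ s)" "ceq a' (x @ z)" "ceq (us @ d2) (y @ s)" by auto
    have seta: "\<forall>q\<in>set a'. \<not> E (fst q) (fst h)" using dc hh by auto
    then have setx: "\<forall>q\<in>set x. \<not> E (fst q) (fst h)" using ceq_set[OF xyzs(3)] by auto
    have "ceq (h # a0) (h # x @ y)" using xyzs(1) by (rule ceq_Cons)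
    moreover have "ceq (h # x @ y) (x @ h # y)" using move[OF setx, of y] by (rule ceq_sym)
    ultimately have 1: "ceq (h # a0) (x @ (h # y))" by (rule ceq_trans)
    have "ceq c' (h # us @ d2)" unfolding hh[THEN conjunct2] by (rule move) (use dc hh in auto)
    also have "ceq (h # us @ d2) ((h # y) @ s)" using xyzs(4) by (simp add: ceq_Cons)
    finally have 2: "ceq c' ((h # y) @ s)" .
    show ?thesis using 1 2 xyzs by blast
  qed
qed

definition inv :: "'v letter \<Rightarrow> 'v letter" where "inv x = (fst x, \<not> snd x)"

lemma inv_inv[simp]: "inv (inv x) = x" and fst_inv[simp]: "fst (inv x) = fst x"
  and inv_neq[simp]: "inv x \<noteq> x" "x \<noteq> inv x"
  unfolding inv_def by (cases x; simp)+

definition reduced :: "'v letter list \<Rightarrow> bool" where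
  "reduced w \<longleftrightarrow> \<not> (\<exists>a y b. ceq w (a @ [y, inv y] @ b))"

lemma reduced_ceq: "ceq w w' \<Longrightarrow> reduced w \<Longrightarrow> reduced w'"
  unfolding reduced_def by (meson ceq_trans)

lemma reduced_app: "reduced (a @ b) \<Longrightarrow> reduced a \<and> reduced b"
  unfolding reduced_def
proof (intro conjI notI)
  assume r: "\<not> (\<exists>p y q. ceq (a @ b) (p @ [y, inv y] @ q))"
  {
    assume "\<exists>p y q. ceq a (p @ [y, inv y] @ q)"
    then obtain p y q where "ceq a (p @ [y, inv y] @ q)" by blast
    then have "ceq (a @ b) (p @ [y, inv y] @ (q @ b))" using ceq_ctx[of a "p @ [y, inv y] @ q" "[]" b] by simp
    with r show False by blast
  next
    assume "\<exists>p y q. ceq b (p @ [y, inv y] @ q)"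
    then obtain p y q where "ceq b (p @ [y, inv y] @ q)" by blast
    then have "ceq (a @ b) ((a @ p) @ [y, inv y] @ q)" using ceq_ctx[of b _ a "[]"] by simp
    with r show False by blast
  }
qed

lemma reduced_Cons: "reduced (x # w) \<Longrightarrow> reduced w"
  using reduced_app[of "[x]" w] by simp

lemma reduced_Nil: "reduced []"
  unfolding reduced_def using ceq_length by fastforce

end



context rg
begin

definition mv :: "'v letter \<Rightarrow> 'v letter list \<Rightarrow> bool" where
  "mv x w \<longleftrightarrow> (\<exists>w'. ceq w (x # w'))"

definition act :: "'v letter \<Rightarrow> 'v letter list \<Rightarrow> 'v letter list" where
  "act x w = (if mv (inv x) w then (SOME w'. ceq w (inv x # w')) else x # w)"

lemma act_mv: "ceq w (inv x # w') \<Longrightarrow> ceq (act x w) w'"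
proof -
  assume h: "ceq w (inv x # w')"
  then have m: "mv (inv x) w" unfolding mv_def by blast
  have "ceq w (inv x # (SOME w'. ceq w (inv x # w')))" by (rule someI[of _ w']) (rule h)
  then have "ceq (inv x # (SOME w'. ceq w (inv x # w'))) (inv x # w')"
    using h by (meson ceq_sym ceq_trans)
  then show ?thesis using m unfolding act_def by (simp add: cancel)
qed

lemma act_nmv: "\<not> mv (inv x) w \<Longrightarrow> act x w = x # w"
  unfolding act_def by simp

lemma mv_ceq: "ceq w1 w2 \<Longrightarrow> mv x w1 \<Longrightarrow> mv x w2"
  unfolding mv_def by (meson ceq_sym ceq_trans)

lemma act_ceq: "ceq w1 w2 \<Longrightarrow> ceq (act x w1) (act x w2)"
proof (cases "mv (inv x) w1")
  case True
  assume c: "ceq w1 w2"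
  then obtain p1 where p1: "ceq w1 (inv x # p1)" using True unfolding mv_def by blast
  then have p2: "ceq w2 (inv x # p1)" using c by (meson ceq_sym ceq_trans)
  have "ceq (act x w1) p1" using act_mv[OF p1] .
  moreover have "ceq (act x w2) p1" using act_mv[OF p2] .
  ultimately show ?thesis by (meson ceq_sym ceq_trans)
next
  case False
  assume c: "ceq w1 w2"
  then have "\<not> mv (inv x) w2" using False mv_ceq ceq_sym by blast
  then show ?thesis using False c by (simp add: act_nmv ceq_Cons)
qed

lemma red_Cons: "reduced w \<Longrightarrow> \<not> mv (inv x) w \<Longrightarrow> reduced (x # w)"
proof (rule ccontr)
  assume r: "reduced w" and nm: "\<not> mv (inv x) w" and nr: "\<not> reduced (x # w)"
  then obtain a y b where h: "ceq (x # w) (a @ [y, inv y] @ b)" unfolding reduced_def by blast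
  from front[OF h] obtain c1 c2 where c: "a @ y # inv y # b = c1 @ x # c2"
    and cm: "\<forall>z\<in>set c1. \<not> E (fst z) (fst x) \<and> z \<noteq> x" and cw: "ceq w (c1 @ c2)" by auto
  from split4[OF c[symmetric]] show False
  proof (elim disjE exE conjE)
    fix a2 assume "a = c1 @ x # a2" "c2 = a2 @ y # inv y # b"
    then have "ceq w (c1 @ a2 @ [y, inv y] @ b)" using cw by simp
    then show False using r unfolding reduced_def by (metis append.assoc)
  next
    assume hh: "c1 = a" "x = y" "c2 = inv y # b"
    have "ceq (c1 @ inv x # b) (inv x # c1 @ b)" by (rule move) (use cm in auto)
    then have "mv (inv x) w" using cw hh unfolding mv_def by (meson ceq_trans)
    then show False using nm by simp
  next
    assume hh: "c1 = a @ [y]" "x = inv y" "c2 = b"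
    have "ceq (a @ inv x # b) (inv x # a @ b)" by (rule move) (use cm hh in auto)
    moreover have "c1 @ c2 = a @ inv x # b" using hh by simp
    ultimately have "mv (inv x) w" using cw unfolding mv_def by (metis ceq_trans)
    then show False using nm by simp
  next
    fix m assume "c1 = a @ y # inv y # m" "b = m @ x # c2"
    then have "ceq w (a @ [y, inv y] @ m @ c2)" using cw by simp
    then show False using r unfolding reduced_def by blast
  qed
qed

lemma act_red: "reduced w \<Longrightarrow> reduced (act x w)"
proof (cases "mv (inv x) w")
  case True
  assume r: "reduced w"
  then obtain p where p: "ceq w (inv x # p)" using True unfolding mv_def by blast
  then have "reduced p" using r reduced_ceq reduced_Cons by blast
  then show ?thesis using act_mv[OF p] reduced_ceq ceq_sym by blast
next
  case False
  assume r: "reduced w"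
  then show ?thesis using False by (simp add: act_nmv red_Cons)
qed

lemma act_inv: "reduced w \<Longrightarrow> ceq (act x (act (inv x) w)) w"
proof (cases "mv x w")
  case True
  assume r: "reduced w"
  then obtain p where p: "ceq w (x # p)" using True unfolding mv_def by blast
  then have 1: "ceq (act (inv x) w) p" using act_mv[of w "inv x"] by simp
  have "\<not> mv (inv x) p"
  proof
    assume "mv (inv x) p"
    then obtain q where "ceq p (inv x # q)" unfolding mv_def by blast
    then have "ceq w ([] @ [x, inv x] @ q)" using p by (simp add: ceq_Cons ceq_trans)
    then show False using r unfolding reduced_def by blast
  qed
  then have "act x p = x # p" by (simp add: act_nmv)
  then have "ceq (act x p) w" using p by (simp add: ceq_sym)
  then show ?thesis using act_ceq[OF 1] by (meson ceq_trans)
next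
  case False
  then have "act (inv x) w = inv x # w" using act_nmv[of "inv x" w] by simp
  then show ?thesis using act_mv[of "inv x # w" x w] by simp
qed

lemma act_comm:
  assumes r: "reduced w" and xy: "\<not> E (fst x) (fst y)"
  shows "ceq (act x (act y w)) (act y (act x w))"
proof (cases "fst x = fst y")
  case True
  then have "y = x \<or> y = inv x" unfolding inv_def by (cases x; cases y) auto
  then show ?thesis
  proof
    assume "y = x" then show ?thesis by simp
  next
    assume y: "y = inv x"
    have "ceq (act x (act (inv x) w)) w" using act_inv[OF r] .
    moreover have "ceq (act (inv x) (act x w)) w" using act_inv[OF r, of "inv x"] by simp
    ultimately show ?thesis using y by (meson ceq_sym ceq_trans)
  qed
next
  case neq: False
  then have ixy: "inv x \<noteq> inv y" "inv y \<noteq> inv x" "x \<noteq> inv y" "inv x \<noteq> y" by (metis fst_inv)+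
  have swap: "ceq (p # q # t) (q # p # t)" if "\<not> E (fst p) (fst q)" for p q t
  proof -
    have "sw ([] @ [p, q] @ t) ([] @ [q, p] @ t)" unfolding sw_def using that by blast
    then show ?thesis by simp
  qed
  have xy': "\<not> E (fst y) (fst x)" using xy Esym by blast
  show ?thesis
  proof (cases "mv (inv y) w"; cases "mv (inv x) w")
    assume my: "mv (inv y) w" and mx: "mv (inv x) w"
    obtain w1 where w1: "ceq w (inv y # w1)" using my unfolding mv_def by blast
    obtain w2 where w2: "ceq w (inv x # w2)" using mx unfolding mv_def by blast
    have "ceq (inv y # w1) (inv x # w2)" using w1 w2 by (meson ceq_sym ceq_trans)
    from levi2[OF this ixy(2)] obtain w3 where w3: "ceq w1 (inv x # w3)" "ceq w2 (inv y # w3)" by blast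
    have "ceq (act y w) (inv x # w3)" using act_mv[OF w1] w3 by (meson ceq_trans)
    then have "ceq (act x (act y w)) (act x (inv x # w3))" by (rule act_ceq)
    then have 1: "ceq (act x (act y w)) w3" using act_mv[of "inv x # w3" x w3] by (meson ceq_trans rtranclp.rtrancl_refl)
    have "ceq (act x w) (inv y # w3)" using act_mv[OF w2] w3 by (meson ceq_trans)
    then have "ceq (act y (act x w)) (act y (inv y # w3))" by (rule act_ceq)
    then have 2: "ceq (act y (act x w)) w3" using act_mv[of "inv y # w3" y w3] by (meson ceq_trans rtranclp.rtrancl_refl)
    show ?thesis using 1 2 by (meson ceq_sym ceq_trans)
  next
    assume my: "mv (inv y) w" and mx: "\<not> mv (inv x) w"
    obtain w1 where w1: "ceq w (inv y # w1)" using my unfolding mv_def by blast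
    have nm1: "\<not> mv (inv x) w1"
    proof
      assume "mv (inv x) w1"
      then obtain w4 where "ceq w1 (inv x # w4)" unfolding mv_def by blast
      then have "ceq w (inv y # inv x # w4)" using w1 by (meson ceq_Cons ceq_trans)
      then have "ceq w (inv x # inv y # w4)" using swap[of "inv y" "inv x" w4] xy' by (simp add: ceq_trans)
      then show False using mx unfolding mv_def by blast
    qed
    have "ceq (act x (act y w)) (act x w1)" using act_mv[OF w1] act_ceq by blast
    then have 1: "ceq (act x (act y w)) (x # w1)" using act_nmv[OF nm1] by simp
    have "act x w = x # w" using act_nmv[OF mx] .
    moreover have "ceq (x # w) (inv y # x # w1)"
      using ceq_Cons[OF w1, of x] swap[of x "inv y" w1] xy by (simp add: ceq_trans)
    ultimately have 2: "ceq (act y (act x w)) (x # w1)" using act_mv by simp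
    show ?thesis using 1 2 by (meson ceq_sym ceq_trans)
  next
    assume my: "\<not> mv (inv y) w" and mx: "mv (inv x) w"
    obtain w1 where w1: "ceq w (inv x # w1)" using mx unfolding mv_def by blast
    have nm1: "\<not> mv (inv y) w1"
    proof
      assume "mv (inv y) w1"
      then obtain w4 where "ceq w1 (inv y # w4)" unfolding mv_def by blast
      then have "ceq w (inv x # inv y # w4)" using w1 by (meson ceq_Cons ceq_trans)
      then have "ceq w (inv y # inv x # w4)" using swap[of "inv x" "inv y" w4] xy by (simp add: ceq_trans)
      then show False using my unfolding mv_def by blast
    qed
    have "ceq (act y (act x w)) (act y w1)" using act_mv[OF w1] act_ceq by blast
    then have 1: "ceq (act y (act x w)) (y # w1)" using act_nmv[OF nm1] by simp
    have "act y w = y # w" using act_nmv[OF my] .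
    moreover have "ceq (y # w) (inv x # y # w1)"
      using ceq_Cons[OF w1, of y] swap[of y "inv x" w1] xy' by (simp add: ceq_trans)
    ultimately have 2: "ceq (act x (act y w)) (y # w1)" using act_mv by simp
    show ?thesis using 1 2 by (meson ceq_sym ceq_trans)
  next
    assume my: "\<not> mv (inv y) w" and mx: "\<not> mv (inv x) w"
    have n1: "\<not> mv (inv x) (y # w)"
    proof
      assume "mv (inv x) (y # w)"
      then obtain w5 where "ceq (y # w) (inv x # w5)" unfolding mv_def by blast
      from levi2[OF this ixy(4)[symmetric]] obtain w3 where "ceq w (inv x # w3)" by blast
      then show False using mx unfolding mv_def by blast
    qed
    have n2: "\<not> mv (inv y) (x # w)"
    proof
      assume "mv (inv y) (x # w)"
      then obtain w5 where "ceq (x # w) (inv y # w5)" unfolding mv_def by blast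
      from levi2[OF this ixy(3)] obtain w3 where "ceq w (inv y # w3)" by blast
      then show False using my unfolding mv_def by blast
    qed
    show ?thesis using act_nmv[OF my] act_nmv[OF mx] act_nmv[OF n1] act_nmv[OF n2] swap[OF xy] by simp
  qed
qed

end



context rg
begin

definition Act :: "'v letter list \<Rightarrow> 'v letter list" where
  "Act u = foldr act u []"

lemma foldr_act_ceq: "ceq w1 w2 \<Longrightarrow> ceq (foldr act p w1) (foldr act p w2)"
  by (induction p) (auto simp: act_ceq)

lemma foldr_act_red: "reduced w \<Longrightarrow> reduced (foldr act p w)"
  by (induction p) (auto simp: act_red)

lemma Act_red: "reduced (Act u)"
  unfolding Act_def by (rule foldr_act_red) (rule reduced_Nil)

lemma rstep_Act: "rstep E u u' \<Longrightarrow> ceq (Act u) (Act u')"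
proof (induction rule: rstep.induct)
  case (cancel xs v b ys)
  have r: "reduced (foldr act ys [])" by (rule foldr_act_red) (rule reduced_Nil)
  have "(v, \<not> b) = inv (v, b)" unfolding inv_def by simp
  then have "ceq (act (v, b) (act (v, \<not> b) (foldr act ys []))) (foldr act ys [])"
    using act_inv[OF r, of "(v,b)"] by simp
  then show ?case unfolding Act_def by (simp add: foldr_act_ceq)
next
  case (comm a c xs ys)
  have r: "reduced (foldr act ys [])" by (rule foldr_act_red) (rule reduced_Nil)
  show ?case unfolding Act_def using act_comm[OF r comm] by (simp add: foldr_act_ceq)
qed

lemma weq_Act: "weq E u u' \<Longrightarrow> ceq (Act u) (Act u')"
  unfolding weq_def
proof (induction rule: equivclp_induct)
  case base then show ?case by simp
next
  case (step y z)
  then show ?case using rstep_Act by (meson ceq_sym ceq_trans)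
qed

lemma Act_id: "reduced u \<Longrightarrow> ceq (Act u) u"
proof (induction u)
  case Nil then show ?case by (simp add: Act_def)
next
  case (Cons x u)
  have ru: "reduced u" using Cons.prems reduced_Cons by blast
  have "\<not> mv (inv x) u"
  proof
    assume "mv (inv x) u"
    then obtain q where "ceq u (inv x # q)" unfolding mv_def by blast
    then have "ceq (x # u) ([] @ [x, inv x] @ q)" by (simp add: ceq_Cons)
    then show False using Cons.prems unfolding reduced_def by blast
  qed
  then have "act x u = x # u" by (rule act_nmv)
  moreover have "ceq (Act (x # u)) (act x u)" using Cons.IH[OF ru] by (simp add: Act_def act_ceq)
  ultimately show ?case by simp
qed

theorem red_weq: "reduced u \<Longrightarrow> reduced u' \<Longrightarrow> weq E u u' \<Longrightarrow> ceq u u'"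
  by (meson Act_id weq_Act ceq_sym ceq_trans)

lemma weq_refl[simp]: "weq E u u" unfolding weq_def by simp
lemma weq_sym: "weq E u w \<Longrightarrow> weq E w u" unfolding weq_def by (rule equivclp_sym)
lemma weq_trans: "weq E u w \<Longrightarrow> weq E w z \<Longrightarrow> weq E u z" unfolding weq_def by (rule equivclp_trans)

lemma rstep_ctx: "rstep E u w \<Longrightarrow> rstep E (p @ u @ q) (p @ w @ q)"
proof (induction rule: rstep.induct)
  case (cancel xs v b ys)
  show ?case using rstep.cancel[of E "p @ xs" v b "ys @ q"] by simp
next
  case (comm a c xs ys)
  show ?case using rstep.comm[where E=E and a=a and c=c and xs="p @ xs" and ys="ys @ q", OF comm] by simp
qed

lemma weq_ctx: "weq E u w \<Longrightarrow> weq E (p @ u @ q) (p @ w @ q)"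
  unfolding weq_def
proof (induction rule: equivclp_induct)
  case base then show ?case by simp
next
  case (step y z)
  then show ?case using rstep_ctx by (meson equivclp_into_equivclp)
qed

lemma weq_app: "weq E a a' \<Longrightarrow> weq E b b' \<Longrightarrow> weq E (a @ b) (a' @ b')"
  using weq_ctx[of a a' "[]" b] weq_ctx[of b b' a' "[]"] weq_trans by fastforce

lemma ceq_weq: "ceq u w \<Longrightarrow> weq E u w"
proof (induction rule: rtranclp_induct)
  case base then show ?case by simp
next
  case (step y z)
  then have "rstep E y z" unfolding sw_def using rstep.comm by blast
  then show ?case using step weq_trans unfolding weq_def by (meson r_into_equivclp)
qed

lemma in_cls: "u \<in> cls E w \<longleftrightarrow> weq E w u" unfolding cls_def by simp

lemma cls_eq: "weq E u w \<Longrightarrow> cls E u = cls E w"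
  unfolding cls_def by (auto intro: weq_trans weq_sym)

lemma cls_eqI: "u \<in> cls E w \<Longrightarrow> cls E u = cls E w"
  by (simp add: in_cls cls_eq weq_sym)

lemma gmul_cls: "gmul E (cls E a) (cls E b) = cls E (a @ b)"
proof (rule set_eqI, rule iffI)
  fix u assume "u \<in> gmul E (cls E a) (cls E b)"
  then obtain x y where "weq E a x" "weq E b y" "weq E (x @ y) u" unfolding gmul_def cls_def by blast
  then show "u \<in> cls E (a @ b)" unfolding cls_def by (blast intro: weq_trans weq_app)
next
  fix u assume "u \<in> cls E (a @ b)"
  then show "u \<in> gmul E (cls E a) (cls E b)" unfolding gmul_def cls_def using weq_refl by blast
qed

lemma inv_word_Cons: "inv_word (x # w) = inv_word w @ [inv x]"
  unfolding inv_word_def inv_def by (cases x) auto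

lemma inv_word_app: "inv_word (a @ b) = inv_word b @ inv_word a"
  unfolding inv_word_def by simp

lemma inv_word_inv[simp]: "inv_word (inv_word a) = a"
  unfolding inv_word_def by (induction a) auto

lemma rstep_inv: "rstep E u w \<Longrightarrow> rstep E (inv_word u) (inv_word w)"
proof (induction rule: rstep.induct)
  case (cancel xs v b ys)
  show ?case using rstep.cancel[of E "inv_word ys" v b "inv_word xs"]
    by (simp add: inv_word_def)
next
  case (comm a c xs ys)
  have "\<not> E (fst (inv c)) (fst (inv a))" using comm Esym by auto
  from rstep.comm[where E=E and a="inv c" and c="inv a" and xs="inv_word ys" and ys="inv_word xs", OF this] show ?case
    by (simp add: inv_word_app inv_word_Cons)
qed

lemma weq_inv: "weq E u w \<Longrightarrow> weq E (inv_word u) (inv_word w)"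
  unfolding weq_def
proof (induction rule: equivclp_induct)
  case base then show ?case by simp
next
  case (step y z)
  then show ?case using rstep_inv by (meson equivclp_into_equivclp)
qed

lemma ginv_cls: "ginv E (cls E a) = cls E (inv_word a)"
proof (rule set_eqI, rule iffI)
  fix u assume "u \<in> ginv E (cls E a)"
  then obtain x where "weq E a x" "weq E (inv_word x) u" unfolding ginv_def cls_def by blast
  then show "u \<in> cls E (inv_word a)" unfolding cls_def by (blast intro: weq_trans weq_inv)
next
  fix u assume "u \<in> cls E (inv_word a)"
  then show "u \<in> ginv E (cls E a)" unfolding ginv_def cls_def using weq_refl by blast
qed

lemma weq_inv_cancel: "weq E (inv_word a @ a) []"
proof (induction a)
  case Nil then show ?case by (simp add: inv_word_def)
next
  case (Cons x a)
  have "rstep E (inv_word a @ [inv x, x] @ a) (inv_word a @ a)"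
    using rstep.cancel[of E "inv_word a" "fst x" "\<not> snd x" a] unfolding inv_def by (cases x) auto
  then have "weq E (inv_word (x # a) @ x # a) (inv_word a @ a)"
    unfolding weq_def by (simp add: inv_word_Cons r_into_equivclp)
  then show ?case using Cons.IH weq_trans by blast
qed

lemma weq_inv_cancel2: "weq E (a @ inv_word a) []"
  using weq_inv_cancel[of "inv_word a"] by simp

lemma conj_cls: "gmul E (gmul E (cls E u) (cls E w)) (ginv E (cls E u)) = cls E (u @ w @ inv_word u)"
  by (simp add: gmul_cls ginv_cls)

lemma nonred_shorter: "\<not> reduced w \<Longrightarrow> \<exists>u. weq E w u \<and> length u < length w"
proof -
  assume "\<not> reduced w"
  then obtain a y b where h: "ceq w (a @ [y, inv y] @ b)" unfolding reduced_def by blast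
  have "rstep E (a @ [(fst y, snd y), (fst y, \<not> snd y)] @ b) (a @ b)" by (rule rstep.cancel)
  then have "weq E (a @ [y, inv y] @ b) (a @ b)" unfolding weq_def inv_def by (simp add: r_into_equivclp)
  then have "weq E w (a @ b)" using ceq_weq[OF h] weq_trans by blast
  moreover have "length (a @ b) < length w" using ceq_length[OF h] by simp
  ultimately show ?thesis by blast
qed

lemma glen_le: "u \<in> g \<Longrightarrow> glen g \<le> length u"
  unfolding glen_def by (rule Least_le) blast

lemma glen_ex: "u \<in> g \<Longrightarrow> \<exists>w\<in>g. length w = glen g"
  unfolding glen_def by (rule LeastI) blast

lemma min_red: "u \<in> cls E w \<Longrightarrow> length u = glen (cls E w) \<Longrightarrow> reduced u"
proof (rule ccontr)
  assume u: "u \<in> cls E w" "length u = glen (cls E w)" "\<not> reduced u"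
  then obtain u' where "weq E u u'" "length u' < length u" using nonred_shorter by blast
  then have "u' \<in> cls E w" using u(1) in_cls weq_trans by blast
  then have "glen (cls E w) \<le> length u'" by (rule glen_le)
  then show False using u \<open>length u' < length u\<close> by simp
qed

lemma glen_red: "reduced w \<Longrightarrow> glen (cls E w) = length w"
proof -
  assume r: "reduced w"
  have "w \<in> cls E w" by (simp add: in_cls)
  then obtain u where u: "u \<in> cls E w" "length u = glen (cls E w)" using glen_ex by blast
  then have "reduced u" using min_red by blast
  then have "ceq w u" using red_weq r u(1) in_cls by blast
  then show ?thesis using u ceq_length by simp
qed

lemma supp_red: "reduced w \<Longrightarrow> supp (cls E w) = fst ` set w"
proof -
  assume r: "reduced w"
  have "\<forall>u\<in>cls E w. length u = glen (cls E w) \<longrightarrow> set u = set w"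
  proof (intro ballI impI)
    fix u assume u: "u \<in> cls E w" "length u = glen (cls E w)"
    then have "reduced u" using min_red by blast
    then have "ceq w u" using red_weq r u(1) in_cls by blast
    then show "set u = set w" using ceq_set by simp
  qed
  moreover have "w \<in> cls E w" "length w = glen (cls E w)" using glen_red[OF r] by (auto simp: in_cls)
  ultimately show ?thesis unfolding supp_def by blast
qed

lemma raag_red: "g \<in> raag E \<Longrightarrow> \<exists>w. g = cls E w \<and> reduced w"
proof -
  assume "g \<in> raag E"
  then obtain w0 where g: "g = cls E w0" unfolding raag_def by blast
  then have "w0 \<in> g" by (simp add: in_cls)
  then obtain u where u: "u \<in> g" "length u = glen g" using glen_ex by blast
  then have "reduced u" using min_red g by blast
  moreover have "g = cls E u" using u(1) g cls_eqI by blast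
  ultimately show ?thesis by blast
qed

lemma cls_raag[simp]: "cls E w \<in> raag E" unfolding raag_def by simp

end



context rg
begin

definition FF :: "'v letter list \<Rightarrow> 'v set" where
  "FF w = {v. \<exists>x w'. fst x = v \<and> ceq w (x # w')}"

lemma FF_Cons: "fst x \<in> FF (x # w)"
  unfolding FF_def by (rule CollectI, intro exI conjI, rule refl, rule rtranclp.rtrancl_refl)

lemma gen_cls: "gen E v b = cls E [(v, b)]" unfolding gen_def ..

lemma Sset_red: "reduced w \<Longrightarrow> Sset E (cls E w) = FF w"
proof (rule set_eqI, rule iffI)
  fix v assume r: "reduced w" and "v \<in> Sset E (cls E w)"
  then obtain b h where h: "h \<in> raag E" "cls E w = gmul E (gen E v b) h" "glen (cls E w) = 1 + glen h"
    unfolding Sset_def by blast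
  obtain u where u: "h = cls E u" "reduced u" using raag_red[OF h(1)] by blast
  have c: "cls E w = cls E ((v, b) # u)" using h(2) u by (simp add: gen_cls gmul_cls)
  have l: "length ((v, b) # u) = glen (cls E w)" using h(3) u glen_red by simp
  have "(v, b) # u \<in> cls E w" using c by (simp add: in_cls)
  then have "reduced ((v, b) # u)" using min_red l by blast
  then have "ceq w ((v, b) # u)" using red_weq r \<open>(v, b) # u \<in> cls E w\<close> in_cls by blast
  then show "v \<in> FF w" unfolding FF_def by (intro CollectI exI[of _ "(v,b)"] exI[of _ u] conjI) simp_all
next
  fix v assume r: "reduced w" and "v \<in> FF w"
  then obtain x w' where x: "fst x = v" "ceq w (x # w')" unfolding FF_def by blast
  have rx: "reduced (x # w')" using reduced_ceq[OF x(2) r] .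
  then have rw': "reduced w'" using reduced_Cons by blast
  have "cls E w = cls E (x # w')" using cls_eq ceq_weq x(2) by blast
  also have "\<dots> = gmul E (gen E v (snd x)) (cls E w')" using x(1) by (cases x) (simp add: gen_cls gmul_cls)
  finally have 1: "cls E w = gmul E (gen E v (snd x)) (cls E w')" .
  have 2: "glen (cls E w) = 1 + glen (cls E w')"
    using glen_red[OF r] glen_red[OF rw'] ceq_length[OF x(2)] by simp
  show "v \<in> Sset E (cls E w)" unfolding Sset_def using 1 2 cls_raag by blast
qed

definition blocked :: "'v letter list \<Rightarrow> 'v letter \<Rightarrow> bool" where
  "blocked c y \<longleftrightarrow> (\<exists>q\<in>set c. E (fst q) (fst y) \<or> fst q = fst y)"

inductive cone :: "'v \<Rightarrow> 'v letter list \<Rightarrow> bool" for v where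
  cone1: "cone v [(v, b)]"
| cone2: "cone v c \<Longrightarrow> blocked c y \<Longrightarrow> cone v (c @ [y])"

lemma cone_hd: "cone v c \<Longrightarrow> \<exists>b c'. c = (v, b) # c'"
  by (induction rule: cone.induct) auto

lemma cone_F: "cone v c \<Longrightarrow> reduced c \<Longrightarrow> FF c = {v}"
proof (induction rule: cone.induct)
  case (cone1 b)
  show ?case
  proof (rule set_eqI, rule iffI)
    fix u assume "u \<in> FF [(v, b)]"
    then obtain x w' where "fst x = u" "ceq [(v, b)] (x # w')" unfolding FF_def by blast
    then have "x \<in> set [(v, b)]" using ceq_set[of "[(v, b)]" "x # w'"] by simp
    then show "u \<in> {v}" using \<open>fst x = u\<close> by auto
  next
    fix u assume "u \<in> {v}" then show "u \<in> FF [(v, b)]" using FF_Cons[of "(v,b)" "[]"] by simp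
  qed
next
  case (cone2 c y)
  have rc: "reduced c" using cone2.prems reduced_app by blast
  have IH: "FF c = {v}" using cone2.IH rc .
  obtain b c' where cc: "c = (v, b) # c'" using cone_hd[OF cone2.hyps(1)] by blast
  show ?case
  proof (rule set_eqI, rule iffI)
    fix u assume "u \<in> FF (c @ [y])"
    then obtain x w' where x: "fst x = u" "ceq (c @ [y]) (x # w')" unfolding FF_def by blast
    from front[OF ceq_sym[OF x(2)]] obtain c1 c2 where f: "c @ [y] = c1 @ x # c2"
      "\<forall>z\<in>set c1. \<not> E (fst z) (fst x) \<and> z \<noteq> x" by blast
    show "u \<in> {v}"
    proof (cases c2 rule: rev_cases)
      case Nil
      then have cy: "c1 = c" "x = y" using f(1) by auto
      from cone2.hyps(2) obtain q where q: "q \<in> set c" "E (fst q) (fst y) \<or> fst q = fst y"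
        unfolding blocked_def by blast
      then have qy: "fst q = fst y" "q \<noteq> y" using f(2) cy by auto
      then have qi: "q = inv y" unfolding inv_def by (cases q; cases y) auto
      obtain p r where pr: "c = p @ q # r" using q(1) by (meson split_list)
      have rcomm: "\<forall>z\<in>set r. \<not> E (fst z) (fst (inv y))" using f(2) cy pr by auto
      have "ceq (q # r @ [y]) (r @ q # [y])" using ceq_sym[OF move[OF rcomm, of "[y]"]] qi by simp
      then have "ceq (c @ [y]) (p @ r @ [inv y, inv (inv y)])"
        using ceq_ctx[of "q # r @ [y]" "r @ q # [y]" p "[]"] pr qi by simp
      then have "ceq (c @ [y]) ((p @ r) @ [inv y, inv (inv y)] @ [])" by simp
      then have "\<not> reduced (c @ [y])" unfolding reduced_def by blast
      then show ?thesis using cone2.prems by blast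
    next
      case (snoc c2' y')
      then have "c = c1 @ x # c2'" using f(1) by simp
      then have "ceq c (x # c1 @ c2')" using move f(2) by auto
      then have "fst x \<in> FF c" unfolding FF_def by blast
      then show ?thesis using IH x(1) by simp
    qed
  next
    fix u assume "u \<in> {v}"
    then show "u \<in> FF (c @ [y])" using cc FF_Cons[of "(v,b)" "c' @ [y]"] by simp
  qed
qed

lemma cone_v: "cone v c \<Longrightarrow> v \<in> fst ` set c"
  using cone_hd by fastforce

lemma cone_ne: "cone v c \<Longrightarrow> c \<noteq> []"
  using cone_hd by fastforce

lemma dec_exists:
  "v \<in> fst ` set w \<Longrightarrow> \<exists>a c. ceq w (a @ c) \<and> v \<notin> fst ` set a \<and> cone v c"
proof (induction w rule: rev_induct)
  case Nil then show ?case by simp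
next
  case (snoc y w)
  show ?case
  proof (cases "v \<in> fst ` set w")
    case True
    then obtain a c where ac: "ceq w (a @ c)" "v \<notin> fst ` set a" "cone v c" using snoc.IH by blast
    have w1: "ceq (w @ [y]) (a @ c @ [y])" using ceq_ctx[OF ac(1), of "[]" "[y]"] by simp
    show ?thesis
    proof (cases "blocked c y")
      case True
      then show ?thesis using w1 ac cone2[OF ac(3) True] by (metis append.assoc)
    next
      case False
      then have nb: "\<forall>z\<in>set c. \<not> E (fst z) (fst y)" "\<forall>z\<in>set c. fst z \<noteq> fst y"
        unfolding blocked_def by auto
      have "ceq (c @ [y]) (y # c)" using move[OF nb(1), of "[]"] by simp
      then have "ceq (a @ c @ [y]) ((a @ [y]) @ c)" using ceq_ctx[of "c @ [y]" "y # c" a "[]"] by simp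
      moreover have "fst y \<noteq> v" using nb(2) cone_v[OF ac(3)] by auto
      ultimately show ?thesis using w1 ac by (intro exI[of _ "a @ [y]"] exI[of _ c]) (auto intro: ceq_trans)
    qed
  next
    case False
    then have "fst y = v" using snoc.prems by auto
    then have "cone v [y]" using cone1[of v "snd y"] by (cases y) auto
    then show ?thesis using False by (intro exI[of _ w] exI[of _ "[y]"]) auto
  qed
qed

lemma dec_step:
  "cone v c \<Longrightarrow> \<exists>a' c'. ceq (c @ a) (a' @ c') \<and> set a' \<subseteq> set a \<and> cone v c' \<and> length a' \<le> length a
     \<and> (length a' = length a \<longrightarrow> c' = c \<and> (\<forall>y\<in>set a. \<not> blocked c y))"
proof (induction a rule: rev_induct)
  case Nil then show ?case by (intro exI[of _ "[]"] exI[of _ c]) auto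
next
  case (snoc y a)
  then obtain a' c' where ac: "ceq (c @ a) (a' @ c')" "set a' \<subseteq> set a" "cone v c'" "length a' \<le> length a"
    "length a' = length a \<longrightarrow> c' = c \<and> (\<forall>y\<in>set a. \<not> blocked c y)" by blast
  have w1: "ceq (c @ a @ [y]) (a' @ c' @ [y])" using ceq_ctx[OF ac(1), of "[]" "[y]"] by simp
  show ?case
  proof (cases "blocked c' y")
    case True
    then show ?thesis using w1 ac cone2[OF ac(3) True]
      by (intro exI[of _ a'] exI[of _ "c' @ [y]"]) auto
  next
    case False
    then have nb: "\<forall>z\<in>set c'. \<not> E (fst z) (fst y)"
      unfolding blocked_def by auto
    have "ceq (c' @ [y]) (y # c')" using move[OF nb, of "[]"] by simp
    then have "ceq (a' @ c' @ [y]) ((a' @ [y]) @ c')" using ceq_ctx[of "c' @ [y]" "y # c'" a' "[]"] by simp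
    with w1 have "ceq (c @ a @ [y]) ((a' @ [y]) @ c')" by (rule ceq_trans)
    then show ?thesis using ac False by (intro exI[of _ "a' @ [y]"] exI[of _ c']) auto
  qed
qed

end



context rg
begin

lemma FF_I: "ceq c (x # w') \<Longrightarrow> fst x \<in> FF c"
  unfolding FF_def by (intro CollectI exI[of _ x] exI[of _ w'] conjI) simp_all

lemma dec_unique:
  assumes r: "reduced w" and wac: "ceq w (a @ c)" and va: "v \<notin> fst ` set a" and cc: "cone v c"
  shows "conical_dec E v (cls E w) = (cls E a, cls E c)"
proof -
  have rac: "reduced (a @ c)" using reduced_ceq[OF wac r] .
  then have ra: "reduced a" and rc: "reduced c" using reduced_app by blast+
  have Fc: "FF c = {v}" using cone_F[OF cc rc] .
  have clsw: "cls E w = cls E (a @ c)" using cls_eq ceq_weq wac by blast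
  let ?P = "\<lambda>(t, p). t \<in> raag E \<and> p \<in> raag E \<and> cls E w = gmul E t p \<and>
      glen (cls E w) = glen t + glen p \<and> conical E v p \<and> v \<notin> supp t"
  have P1: "?P (cls E a, cls E c)"
    using clsw glen_red[OF r] glen_red[OF ra] glen_red[OF rc] ceq_length[OF wac] Sset_red[OF rc] Fc
      supp_red[OF ra] va
    by (simp add: gmul_cls conical_def)
  have P2: "tp = (cls E a, cls E c)" if "?P tp" for tp
  proof -
    obtain t p where tp: "tp = (t, p)" by (cases tp)
    then have h: "t \<in> raag E" "p \<in> raag E" "cls E w = gmul E t p" "glen (cls E w) = glen t + glen p"
      "conical E v p" "v \<notin> supp t" using that by auto
    obtain a' where a': "t = cls E a'" "reduced a'" using raag_red[OF h(1)] by blast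
    obtain c' where c': "p = cls E c'" "reduced c'" using raag_red[OF h(2)] by blast
    have e: "cls E w = cls E (a' @ c')" using h(3) a' c' by (simp add: gmul_cls)
    have m: "a' @ c' \<in> cls E w" using e by (simp add: in_cls)
    moreover have "length (a' @ c') = glen (cls E w)" using h(4) a' c' glen_red by simp
    ultimately have "reduced (a' @ c')" using min_red by blast
    then have "ceq w (a' @ c')" using red_weq r m in_cls by blast
    then have "ceq (a @ c) (a' @ c')" using wac by (meson ceq_sym ceq_trans)
    from levi[OF this] obtain x y z s where l: "ceq a (x @ y)" "ceq c (z @ s)" "ceq a' (x @ z)"
      "ceq c' (y @ s)" by blast
    have Fc': "FF c' = {v}" using h(5) c' Sset_red unfolding conical_def by auto
    have va': "v \<notin> fst ` set a'" using h(6) a' supp_red by auto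
    have z: "z = []"
    proof (rule ccontr)
      assume "z \<noteq> []" then obtain z0 zr where zz: "z = z0 # zr" by (cases z) auto
      then have "fst z0 \<in> FF c" using l(2) FF_I[of c z0 "zr @ s"] by simp
      then have "fst z0 = v" using Fc by auto
      moreover have "z0 \<in> set a'" using ceq_set[OF l(3)] zz by auto
      ultimately show False using va' by (metis image_eqI)
    qed
    have y: "y = []"
    proof (rule ccontr)
      assume "y \<noteq> []" then obtain y0 yr where yy: "y = y0 # yr" by (cases y) auto
      then have "fst y0 \<in> FF c'" using l(4) FF_I[of c' y0 "yr @ s"] by simp
      then have "fst y0 = v" using Fc' by auto
      moreover have "y0 \<in> set a" using ceq_set[OF l(1)] yy by auto
      ultimately show False using va by (metis image_eqI)
    qed
    have "ceq a a'" using l(1) l(3) y z by (metis append_Nil2 ceq_sym ceq_trans)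
    moreover have "ceq c c'" using l(2) l(4) y z by (metis append_Nil ceq_sym ceq_trans)
    ultimately show ?thesis using tp a' c' cls_eq ceq_weq by metis
  qed
  show ?thesis unfolding conical_dec_def by (rule the_equality[of ?P, OF P1 P2])
qed

lemma step_cls:
  assumes "reduced w" "ceq w (a @ c)" "v \<notin> fst ` set a" "cone v c"
  shows "conical_step E v (cls E w) = cls E (c @ a)"
  unfolding conical_step_def using dec_unique[OF assms] by (simp add: gmul_cls)

lemma cyc_rot:
  assumes r: "reduced w" and cr: "cyc_reduced E (cls E w)" and wac: "ceq w (a @ c)"
  shows "reduced (c @ a) \<and> cyc_reduced E (cls E (c @ a))"
proof -
  have key: "length w \<le> glen (cls E (u @ (c @ a) @ inv_word u))" for u
  proof -
    have "weq E w (a @ c)" using ceq_weq[OF wac] .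
    then have q1: "weq E (inv_word a @ w @ a) (inv_word a @ (a @ c) @ a)" by (rule weq_ctx)
    have q2: "weq E ((inv_word a @ a) @ c @ a) ([] @ c @ a)"
      using weq_ctx[OF weq_inv_cancel[of a], of "[]" "c @ a"] by simp
    have "weq E (inv_word a @ w @ a) (c @ a)" using weq_trans[OF q1] q2 by simp
    then have "weq E (u @ (inv_word a @ w @ a) @ inv_word u) (u @ (c @ a) @ inv_word u)" by (rule weq_ctx)
    then have q3: "cls E (u @ (inv_word a @ w @ a) @ inv_word u) = cls E (u @ (c @ a) @ inv_word u)"
      by (rule cls_eq)
    have q4: "(u @ inv_word a) @ w @ inv_word (u @ inv_word a) = u @ (inv_word a @ w @ a) @ inv_word u"
      by (simp add: inv_word_app)
    have "cls E (u @ (c @ a) @ inv_word u) = cls E ((u @ inv_word a) @ w @ inv_word (u @ inv_word a))"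
      using q3 q4 by simp
    also have "\<dots> = gmul E (gmul E (cls E (u @ inv_word a)) (cls E w)) (ginv E (cls E (u @ inv_word a)))"
      by (simp add: conj_cls)
    finally have "glen (cls E w) \<le> glen (cls E (u @ (c @ a) @ inv_word u))"
      using cr unfolding cyc_reduced_def by simp
    then show ?thesis using glen_red[OF r] by simp
  qed
  have l: "length (c @ a) = length w" using ceq_length[OF wac] by simp
  have "glen (cls E (c @ a)) \<le> length (c @ a)" by (rule glen_le) (simp add: in_cls)
  moreover have "length w \<le> glen (cls E (c @ a))" using key[of "[]"] by (simp add: inv_word_def)
  ultimately have gl: "glen (cls E (c @ a)) = length (c @ a)" using l by simp
  have red: "reduced (c @ a)" using min_red[of "c @ a" "c @ a"] gl by (simp add: in_cls)
  have "cyc_reduced E (cls E (c @ a))" unfolding cyc_reduced_def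
  proof
    fix h assume "h \<in> raag E"
    then obtain u where u: "h = cls E u" unfolding raag_def by blast
    show "glen (cls E (c @ a)) \<le> glen (gmul E (gmul E h (cls E (c @ a))) (ginv E h))"
      using key[of u] gl l u by (simp add: conj_cls)
  qed
  then show ?thesis using red by blast
qed

lemma conn_split:
  assumes conn: "connected_in E S" and S: "S = A \<union> C" and a0: "a0 \<in> A" and c0: "c0 \<in> C"
    and nc: "\<forall>x\<in>A. \<forall>y\<in>C. \<not> E x y \<and> x \<noteq> y"
  shows False
proof -
  have "(\<lambda>x y. x \<in> S \<and> y \<in> S \<and> E x y)\<^sup>*\<^sup>* a0 c0" using conn S a0 c0 unfolding connected_in_def by blast
  then have "c0 \<in> A"
  proof (induction rule: rtranclp_induct)
    case base then show ?case using a0 .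
  next
    case (step y z)
    then have "z \<in> S" "E y z" "y \<in> A" by auto
    then show ?case using nc S by blast
  qed
  then show False using nc c0 by blast
qed

definition good :: "'v \<Rightarrow> 'v set \<Rightarrow> 'v elt \<Rightarrow> bool" where
  "good v S g \<longleftrightarrow> (\<exists>w. g = cls E w \<and> reduced w \<and> cyc_reduced E g \<and> fst ` set w = S)"

abbreviation mu where "mu v g \<equiv> glen (fst (conical_dec E v g))"

lemma good_step:
  assumes conn: "connected_in E S" and vS: "v \<in> S" and gd: "good v S g" and nc: "\<not> conical E v g"
  shows "good v S (conical_step E v g) \<and> mu v (conical_step E v g) < mu v g"
proof -
  obtain w where w: "g = cls E w" "reduced w" "cyc_reduced E g" "fst ` set w = S"
    using gd unfolding good_def by blast
  obtain a c where ac: "ceq w (a @ c)" "v \<notin> fst ` set a" "cone v c"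
    using dec_exists[of v w] vS w(4) by blast
  have rac: "reduced (a @ c)" using reduced_ceq[OF ac(1) w(2)] .
  then have ra: "reduced a" and rc: "reduced c" using reduced_app by blast+
  have d1: "conical_dec E v g = (cls E a, cls E c)" using dec_unique[OF w(2) ac] w(1) by simp
  have ane: "a \<noteq> []"
  proof
    assume "a = []"
    then have "g = cls E c" using w(1) ac(1) cls_eq ceq_weq by fastforce
    then have "conical E v g" unfolding conical_def using Sset_red[OF rc] cone_F[OF ac(3) rc] by simp
    then show False using nc by simp
  qed
  have st: "conical_step E v g = cls E (c @ a)" using step_cls[OF w(2) ac] w(1) by simp
  have cy: "reduced (c @ a) \<and> cyc_reduced E (cls E (c @ a))" using cyc_rot[OF w(2) _ ac(1)] w by simp
  have sS: "fst ` set (c @ a) = S" using ceq_set[OF ac(1)] w(4) by auto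
  have good': "good v S (conical_step E v g)" unfolding good_def st using cy sS by blast
  obtain a' c' where ac': "ceq (c @ a) (a' @ c')" "set a' \<subseteq> set a" "cone v c'" "length a' \<le> length a"
    "length a' = length a \<longrightarrow> c' = c \<and> (\<forall>y\<in>set a. \<not> blocked c y)"
    using dec_step[OF ac(3), of a] by blast
  have va': "v \<notin> fst ` set a'" using ac(2) ac'(2) by blast
  have d2: "conical_dec E v (cls E (c @ a)) = (cls E a', cls E c')"
    using dec_unique[OF _ ac'(1) va' ac'(3)] cy by blast
  have ra': "reduced a'" using reduced_ceq[OF ac'(1)] cy reduced_app by blast
  have lt: "length a' < length a"
  proof (rule ccontr)
    assume "\<not> length a' < length a"
    then have "\<forall>y\<in>set a. \<not> blocked c y" using ac'(4) ac'(5) by simp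
    then have nb: "\<forall>x\<in>fst ` set a. \<forall>y\<in>fst ` set c. \<not> E x y \<and> x \<noteq> y"
      unfolding blocked_def by (metis Esym imageE)
    have S2: "S = fst ` set a \<union> fst ` set c" using ceq_set[OF ac(1)] w(4) by auto
    obtain a0 where "a0 \<in> set a" using ane by (cases a) auto
    then show False using conn_split[OF conn S2 _ cone_v[OF ac(3)] nb] by blast
  qed
  have "mu v (conical_step E v g) = length a'" using st d2 glen_red[OF ra'] by simp
  moreover have "mu v g = length a" using d1 glen_red[OF ra] by simp
  ultimately show ?thesis using good' lt by simp
qed

lemma good_ex:
  assumes conn: "connected_in E S" and vS: "v \<in> S"
  shows "good v S g \<Longrightarrow> \<exists>k. conical E v ((conical_step E v ^^ k) g)"
proof (induction "mu v g" arbitrary: g rule: less_induct)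
  case less
  show ?case
  proof (cases "conical E v g")
    case True
    then show ?thesis by (intro exI[of _ 0]) simp
  next
    case False
    from good_step[OF conn vS less.prems False] obtain k where
      "conical E v ((conical_step E v ^^ k) (conical_step E v g))" using less.hyps by blast
    then have "conical E v ((conical_step E v ^^ Suc k) g)" by (simp add: funpow_Suc_right del: funpow.simps)
    then show ?thesis by blast
  qed
qed

lemma good_iter:
  assumes conn: "connected_in E S" and vS: "v \<in> S" and gd: "good v S g"
  shows "(\<forall>j<k. \<not> conical E v ((conical_step E v ^^ j) g)) \<Longrightarrow> good v S ((conical_step E v ^^ k) g)"
proof (induction k)
  case 0 then show ?case using gd by simp
next
  case (Suc k)
  then have "good v S ((conical_step E v ^^ k) g)" by simp
  moreover have "\<not> conical E v ((conical_step E v ^^ k) g)" using Suc.prems by simp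
  ultimately show ?case using good_step[OF conn vS] by simp
qed

theorem main_cc:
  assumes g: "g \<in> raag E" and cr: "cyc_reduced E g" and ns: "non_split E g" and v: "v \<in> supp g"
  shows "conical E v (conical_conj E v g) \<and> supp (conical_conj E v g) = supp g"
proof -
  obtain w where w: "g = cls E w" "reduced w" using raag_red[OF g] by blast
  define S where "S = supp g"
  have Sw: "S = fst ` set w" using supp_red[OF w(2)] w(1) S_def by simp
  have conn: "connected_in E S" using ns S_def unfolding non_split_def by simp
  have vS: "v \<in> S" using v S_def by simp
  have gd: "good v S g" unfolding good_def using w cr Sw by blast
  define K where "K = (LEAST k. conical E v ((conical_step E v ^^ k) g))"
  have ex: "\<exists>k. conical E v ((conical_step E v ^^ k) g)" using good_ex[OF conn vS gd] .
  have cK: "conical E v ((conical_step E v ^^ K) g)" unfolding K_def using ex by (rule LeastI_ex)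
  have "\<forall>j<K. \<not> conical E v ((conical_step E v ^^ j) g)" unfolding K_def using not_less_Least by blast
  then have "good v S ((conical_step E v ^^ K) g)" using good_iter[OF conn vS gd] by blast
  then obtain w' where w': "(conical_step E v ^^ K) g = cls E w'" "reduced w'" "fst ` set w' = S"
    unfolding good_def by blast
  have cc: "conical_conj E v g = (conical_step E v ^^ K) g" unfolding conical_conj_def K_def ..
  show ?thesis using cK cc w' supp_red S_def by simp
qed

end


theorem lemma2p11:
  fixes E :: "'v::finite \<Rightarrow> 'v \<Rightarrow> bool" and g1 g2 :: "'v elt"
  assumes "symp E" and "irreflp E"
    and "g1 \<in> raag E" and "g2 \<in> raag E"
    and "strongly_non_split E g1" and "strongly_non_split E g2"
    and "cyc_reduced E g1" and "cyc_reduced E g2"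
  shows "\<exists>R. linear_order_on UNIV R \<and>
           (\<exists>v1\<in>supp g1. \<exists>v2\<in>supp g2.
              strongly_non_split E (conical_conj E v1 g1) \<and> SD_conical E R (conical_conj E v1 g1) \<and>
              strongly_non_split E (conical_conj E v2 g2) \<and> SD_conical E R (conical_conj E v2 g2))"
proof -
  interpret rg E by unfold_locales (rule assms(1))
  have key: "strongly_non_split E (conical_conj E v g) \<and> conical E v (conical_conj E v g)"
    if "g \<in> raag E" "cyc_reduced E g" "strongly_non_split E g" "v \<in> supp g" for g v
  proof -
    have ns: "non_split E g" using that(3) unfolding strongly_non_split_def by simp
    from main_cc[OF that(1,2) ns that(4)] have c: "conical E v (conical_conj E v g)"
      and s: "supp (conical_conj E v g) = supp g" by auto
    have "strongly_non_split E (conical_conj E v g)"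
      using that(3) s unfolding strongly_non_split_def non_split_def disj_commutes_def by simp
    then show ?thesis using c by simp
  qed
  have ne1: "supp g1 \<noteq> {}" using assms(5) unfolding strongly_non_split_def non_split_def connected_in_def by simp
  obtain v1 v2 where v12: "v1 \<in> supp g1" "v2 \<in> supp g2" "v1 = v2 \<or> E v1 v2"
  proof (cases "supp g1 \<inter> supp g2 = {}")
    case False
    then obtain v where "v \<in> supp g1" "v \<in> supp g2" by blast
    then show ?thesis using that by blast
  next
    case True
    obtain v1 where v1: "v1 \<in> supp g1" using ne1 by blast
    then have "v1 \<notin> supp g2" using True by blast
    moreover have "\<not> disj_commutes E v1 g2" using assms(6) unfolding strongly_non_split_def by blast
    ultimately obtain u where "u \<in> supp g2" "E v1 u" unfolding disj_commutes_def by blast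
    then show ?thesis using that v1 by blast
  qed
  obtain f :: "'v \<Rightarrow> nat" and n where "f ` UNIV = {i. i < n}" "inj_on f UNIV"
    using finite_imp_inj_to_nat_seg[OF finite_UNIV] by blast
  then have injf: "inj f" by simp
  define k where "k x = (if x = v1 then 0 else if x = v2 then 1 else f x + 2)" for x
  have injk: "k x = k y \<Longrightarrow> x = y" for x y
    unfolding k_def using injf by (auto split: if_splits dest: injD)
  define R where "R = {(x, y). k x \<le> k y}"
  have lin: "linear_order_on UNIV R"
    unfolding linear_order_on_def partial_order_on_def preorder_on_def refl_on_def trans_def
      antisym_def total_on_def R_def
    using injk by (auto intro: le_antisym)
  have sd1: "SD_conical E R (conical_conj E v1 g1)"
    unfolding SD_conical_def
  proof (intro exI[of _ v1] conjI allI impI)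
    show "conical E v1 (conical_conj E v1 g1)" using key[OF assms(3) assms(7) assms(5) v12(1)] by simp
  next
    fix v assume "(v, v1) \<in> R \<and> v \<noteq> v1"
    then have "k v \<le> k v1" "v \<noteq> v1" unfolding R_def by auto
    moreover have "k v1 = 0" unfolding k_def by simp
    ultimately have "k v = k v1" by simp
    then have False using injk \<open>v \<noteq> v1\<close> by blast
    then show "E v v1" ..
  qed
  have sd2: "SD_conical E R (conical_conj E v2 g2)"
    unfolding SD_conical_def
  proof (intro exI[of _ v2] conjI allI impI)
    show "conical E v2 (conical_conj E v2 g2)" using key[OF assms(4) assms(8) assms(6) v12(2)] by simp
  next
    fix v assume h: "(v, v2) \<in> R \<and> v \<noteq> v2"
    have kv: "k v \<le> k v2" using h unfolding R_def by simp
    show "E v v2"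
    proof (cases "v1 = v2")
      case True
      then have "k v2 = k v1" by simp
      moreover have "k v1 = 0" unfolding k_def by simp
      ultimately have "k v = k v2" using kv by simp
      then have "v = v2" using injk by blast
      then show ?thesis using h by simp
    next
      case False
      then have "k v2 = 1" unfolding k_def by simp
      have "v = v1"
      proof (rule ccontr)
        assume "v \<noteq> v1"
        then have "k v = f v + 2" using h unfolding k_def by simp
        then show False using kv \<open>k v2 = 1\<close> by simp
      qed
      then show ?thesis using False v12(3) by simp
    qed
  qed
  show ?thesis
    using lin sd1 sd2 key[OF assms(3) assms(7) assms(5) v12(1)] key[OF assms(4) assms(8) assms(6) v12(2)] v12
    by blast
qed

end
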